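(* Let $T=(p,q:F\to E)$ be an LR textile system whose associated 2-graph $\Lambda=\Lambda_T$ is row-finite and essential. Let $\mathcal G=\{\mathcal G^i_z: z\in\Lambda^0,\ 1\le i\le m(z)\}$ be a 2-graph insplitting partition of $\Lambda$, let $\Lambda_I$ be the resulting insplit 2-graph, and let $T_I=T_{\Lambda_I}$ be its associated textile system. Then there are textile systems $T_A,T_B,T_C,T_D$ such that $T_A$ is a textile (Johnson--Madden) insplit of $T$, $T_B=\widehat{T_A}$, $T_C$ is a textile insplit of $T_B$, and $T_D=\widehat{T_C}$, and such that, after a bijective relabeling of alphabets, the shift spaces $\mathsf X^+_{T_D}$ and $\mathsf X^+_{T_I}$ coincide (i.e. $T_D$ and $T_I$ give rise to identical tilings of $\mathbb R_{\ge 0}^2$). In particular $\mathsf X^+_{T}$ and $\mathsf X^+_{T_I}$ are conjugate, so 2-graph insplitting induces a conjugacy of the associated one-sided 2-dimensional shifts of finite type.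
   Context: $\mathbb N=\{0,1,2,\dots\}$; $\varepsilon_1,\varepsilon_2$ are the standard generators of $\mathbb N^2$. A directed graph $E=(E^0,E^1,r,s)$ has vertices $E^0$, edges $E^1$, range and source maps $r,s:E^1\to E^0$; for $v\in E^0$, $vE^1=r^{-1}(v)$. A graph homomorphism $p:F\to E$ is a pair of maps $F^0\to E^0$, $F^1\to E^1$ (both written $p$) with $r(p(f))=p(r(f))$, $s(p(f))=p(s(f))$. A textile system $T=(p,q:F\to E)$ consists of directed graphs $F,E$ and graph homomorphisms $p,q:F\to E$ such that $f\mapsto(r(f),p(f),s(f),q(f))$ is injective on $F^1$. $p$ has unique $r$-path lifting if for all $v\in F^0$, $e\in E^1$ with $p(v)=r(e)$ there is exactly one $f\in F^1$ with $r(f)=v$, $p(f)=e$; unique $s$-path lifting is defined analogously with $s$. $T$ is LR if $p$ has unique $r$-path lifting and $q$ has unique $s$-path lifting. Shift space: $\mathsf X^+_T=\{x:\mathbb N^2\to F^1 : s(x_n)=r(x_{n+\varepsilon_1}),\ p(x_n)=q(x_{n+\varepsilon_2})\ \forall n\in\mathbb N^2\}$ with the product topology ($F^1$ discrete) and shift action $(\sigma^m x)_n=x_{n+m}$, $m\in\mathbb N^2$. Two such spaces are conjugate if there is a homeomorphism $h$ between them with $h\circ\sigma^m=\sigma^m\circ h$ for all $m\in\mathbb N^2$. Directed-graph insplitting: given, for each $v\in F^0$, a partition of $vF^1$ into nonempty sets $\mathcal F_v^1,\dots,\mathcal F_v^{m(v)}$, the insplit graph $F_I$ has $F_I^0=\{v^i: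 v\in F^0, 1\le i\le m(v)\}$, $F_I^1=\{f^j: f\in F^1, 1\le j\le m(s(f))\}$, $s(f^j)=s(f)^j$, and $r(f^j)=r(f)^k$ where $f\in\mathcal F^k_{r(f)}$. Textile (Johnson--Madden) insplit of $T$: $T_I=(p_I,q_I:F_I\to E)$ with $p_I(v^i)=p(v)$, $p_I(f^j)=p(f)$, and likewise for $q_I$. Inverted textile system: for $T=(p,q:F\to E)$, $\widehat T=(\hat p,\hat q:\widehat F\to\widehat E)$ where $\widehat E$ has vertices $E^0$, edges $F^0$, range $q|_{F^0}$ and source $p|_{F^0}$; $\widehat F$ has vertices $E^1$, edges $F^1$, range $q|_{F^1}$, source $p|_{F^1}$; $\hat p=(s_E,s_F)$, $\hat q=(r_E,r_F)$. 2-graphs: a 2-graph is a countable category $\Lambda$ with a functor $d:\Lambda\to\mathbb N^2$ such that whenever $d(\lambda)=m+n$ there are unique $\mu,\nu$ with $d(\mu)=m,d(\nu)=n,\lambda=\mu\nu$ (composition $\mu\nu$ defined when $s(\mu)=r(\nu)$). $\Lambda^m=d^{-1}(m)$, $\Lambda^0$ = vertices, $\Lambda^1=\Lambda^{\varepsilon_1}\sqcup\Lambda^{\varepsilon_2}$ (edges of color 1 and 2); $\lambda(m,n)$ denotes the unique factor of degree $n-m$ in position $[m,n]$. Row-finite: $v\Lambda^m$ finite; essential: $v\Lambda^m$ and $\Lambda^m v$ nonempty for all $v,m$. Any 2-graph is the quotient of the path category of its 1-skeleton (2-colored graph $(\Lambda^0,\Lambda^1,r,s)$) by the relation identifying $fg\sim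 g'f'$ when they are the same element of $\Lambda^{\varepsilon_1+\varepsilon_2}$ (commuting squares). The 2-graph $\Lambda_T$ of a textile system: 2-colored graph with vertices $E^0$, color-1 edges $E^1$ (with $r,s$ from $E$) and color-2 edges $F^0$ with $r(w)=q(w)$, $s(w)=p(w)$; commuting squares $ve\sim e'w$ iff there is $f\in F^1$ with $r(f)=v,s(f)=w,p(f)=e,q(f)=e'$; $\Lambda_T$ is the quotient of the path category by the equivalence generated by these squares (compatible with concatenation). For LR $T$ this is a 2-graph, with $\Lambda_T^{\varepsilon_1+\varepsilon_2}$ identified with $F^1$. Conversely, the textile system of a 2-graph $\Lambda$ is $T_\Lambda=(p,q:F_\Lambda\to E_\Lambda)$ with $E_\Lambda=(\Lambda^0,\Lambda^{\varepsilon_1},r,s)$, $F_\Lambda=(\Lambda^{\varepsilon_2},\Lambda^{\varepsilon_1+\varepsilon_2},\lambda\mapsto\lambda(0,\varepsilon_2),\lambda\mapsto\lambda(\varepsilon_1,\varepsilon_1+\varepsilon_2))$, $p(\lambda)=\lambda(\varepsilon_2,\varepsilon_1+\varepsilon_2)$, $q(\lambda)=\lambda(0,\varepsilon_1)$, and on $F_\Lambda^0=\Lambda^{\varepsilon_2}$, $p=s$, $q=r$. 2-graph insplitting: an insplitting partition of $\Lambda$ is, for each $z\in\Lambda^0$, a partition of $z\Lambda^1$ (edges of either color with range $z$) into nonempty sets $\mathcal G^1_z,\dots,\mathcal G^{m(z)}_z$ satisfying the pairing condition: for every $\lambda\in\Lambda^{\varepsilon_1+\varepsilon_2}$, $\lambda(0,\varepsilon_1)$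 and $\lambda(0,\varepsilon_2)$ lie in the same set $\mathcal G^j_{r(\lambda)}$. The insplit 2-graph $\Lambda_I$ is the quotient of the path category of the 2-colored graph with vertices $\{z^i:1\le i\le m(z)\}$, edges $\{f^i: f\in\Lambda^1, 1\le i\le m(s(f))\}$, $d(f^i)=d(f)$, $s(f^i)=s(f)^i$, $r(f^i)=r(f)^j$ where $f\in\mathcal G^j_{r(f)}$, by the commuting squares $f^ig^k\sim_I a^jb^k$ iff $g\in\mathcal G^i_{s(f)}$, $b\in\mathcal G^j_{s(a)}$ and $fg\sim ab$ in $\Lambda$. *)

theory Defs
  imports "HOL-Analysis.Analysis"
begin

record ('v,'e) dgraph =
  verts :: "'v set"
  edges :: "'e set"
  rng   :: "'e \<Rightarrow> 'v"
  src   :: "'e \<Rightarrow> 'v"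

definition dgraph_wf :: "('v,'e) dgraph \<Rightarrow> bool" where
  "dgraph_wf G \<longleftrightarrow> (\<forall>f\<in>edges G. rng G f \<in> verts G \<and> src G f \<in> verts G)"

text \<open>A textile system T = (p,q : F \<rightarrow> E). Type parameters:
  'a = E^0, 'b = E^1, 'c = F^0, 'd = F^1.\<close>
record ('a,'b,'c,'d) textile =
  tE  :: "('a,'b) dgraph"
  tF  :: "('c,'d) dgraph"
  pV  :: "'c \<Rightarrow> 'a"
  pE  :: "'d \<Rightarrow> 'b"
  qV  :: "'c \<Rightarrow> 'a"
  qE  :: "'d \<Rightarrow> 'b"

definition graph_hom ::
  "('c,'d) dgraph \<Rightarrow> ('a,'b) dgraph \<Rightarrow> ('c \<Rightarrow> 'a) \<Rightarrow> ('d \<Rightarrow> 'b) \<Rightarrow> bool" where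
  "graph_hom F E hV hE \<longleftrightarrow>
     (\<forall>v\<in>verts F. hV v \<in> verts E) \<and>
     (\<forall>f\<in>edges F. hE f \<in> edges E \<and> rng E (hE f) = hV (rng F f) \<and> src E (hE f) = hV (src F f))"

definition textile_system :: "('a,'b,'c,'d) textile \<Rightarrow> bool" where
  "textile_system T \<longleftrightarrow>
     dgraph_wf (tE T) \<and> dgraph_wf (tF T) \<and>
     graph_hom (tF T) (tE T) (pV T) (pE T) \<and>
     graph_hom (tF T) (tE T) (qV T) (qE T) \<and>
     inj_on (\<lambda>f. (rng (tF T) f, pE T f, src (tF T) f, qE T f)) (edges (tF T))"

text \<open>p has unique r-path lifting, q has unique s-path lifting.\<close>
definition LR :: "('a,'b,'c,'d) textile \<Rightarrow> bool" where
  "LR T \<longleftrightarrow>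
     (\<forall>v\<in>verts (tF T). \<forall>e\<in>edges (tE T). pV T v = rng (tE T) e \<longrightarrow>
        (\<exists>!f. f \<in> edges (tF T) \<and> rng (tF T) f = v \<and> pE T f = e)) \<and>
     (\<forall>v\<in>verts (tF T). \<forall>e\<in>edges (tE T). qV T v = src (tE T) e \<longrightarrow>
        (\<exists>!f. f \<in> edges (tF T) \<and> src (tF T) f = v \<and> qE T f = e))"

definition shift_space :: "('a,'b,'c,'d) textile \<Rightarrow> (nat \<times> nat \<Rightarrow> 'd) set" where
  "shift_space T = {x. \<forall>i j.
      x (i,j) \<in> edges (tF T) \<and>
      src (tF T) (x (i,j)) = rng (tF T) (x (Suc i, j)) \<and>
      pE T (x (i,j)) = qE T (x (i, Suc j))}"

definition shift :: "nat \<times> nat \<Rightarrow> (nat \<times> nat \<Rightarrow> 'd) \<Rightarrow> (nat \<times> nat \<Rightarrow> 'd)" where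
  "shift m x = (\<lambda>n. x (fst n + fst m, snd n + snd m))"

definition shift_topology :: "('a,'b,'c,'d) textile \<Rightarrow> (nat \<times> nat \<Rightarrow> 'd) topology" where
  "shift_topology T =
     subtopology (product_topology (\<lambda>_. discrete_topology (edges (tF T))) UNIV) (shift_space T)"

definition conjugate_shifts :: "('a,'b,'c,'d) textile \<Rightarrow> ('a2,'b2,'c2,'d2) textile \<Rightarrow> bool" where
  "conjugate_shifts T1 T2 \<longleftrightarrow>
     (\<exists>h. homeomorphic_map (shift_topology T1) (shift_topology T2) h \<and>
          (\<forall>m. \<forall>x\<in>shift_space T1. h (shift m x) = shift m (h x)))"

definition dg_insplit_partition ::
  "('v,'e) dgraph \<Rightarrow> ('v \<Rightarrow> nat) \<Rightarrow> ('v \<Rightarrow> nat \<Rightarrow> 'e set) \<Rightarrow> bool" where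
  "dg_insplit_partition F m P \<longleftrightarrow>
     (\<forall>v\<in>verts F.
        (\<forall>k\<in>{1..m v}. P v k \<noteq> {}) \<and>
        (\<forall>k\<in>{1..m v}. \<forall>l\<in>{1..m v}. k \<noteq> l \<longrightarrow> P v k \<inter> P v l = {}) \<and>
        (\<Union>k\<in>{1..m v}. P v k) = {f \<in> edges F. rng F f = v})"

definition dg_idx :: "('v \<Rightarrow> nat) \<Rightarrow> ('v \<Rightarrow> nat \<Rightarrow> 'e set) \<Rightarrow> 'v \<Rightarrow> 'e \<Rightarrow> nat" where
  "dg_idx m P v f = (THE k. k \<in> {1..m v} \<and> f \<in> P v k)"

definition dg_insplit ::
  "('v,'e) dgraph \<Rightarrow> ('v \<Rightarrow> nat) \<Rightarrow> ('v \<Rightarrow> nat \<Rightarrow> 'e set) \<Rightarrow> ('v \<times> nat, 'e \<times> nat) dgraph" where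
  "dg_insplit F m P =
     \<lparr> verts = {(v,i). v \<in> verts F \<and> i \<in> {1..m v}},
       edges = {(f,j). f \<in> edges F \<and> j \<in> {1..m (src F f)}},
       rng = (\<lambda>(f,j). (rng F f, dg_idx m P (rng F f) f)),
       src = (\<lambda>(f,j). (src F f, j)) \<rparr>"

definition textile_insplit ::
  "('a,'b,'c,'d) textile \<Rightarrow> ('c \<Rightarrow> nat) \<Rightarrow> ('c \<Rightarrow> nat \<Rightarrow> 'd set) \<Rightarrow> ('a,'b,'c \<times> nat,'d \<times> nat) textile" where
  "textile_insplit T m P =
     \<lparr> tE = tE T, tF = dg_insplit (tF T) m P,
       pV = (\<lambda>(v,i). pV T v), pE = (\<lambda>(f,j). pE T f),
       qV = (\<lambda>(v,i). qV T v), qE = (\<lambda>(f,j). qE T f) \<rparr>"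

definition textile_invert :: "('a,'b,'c,'d) textile \<Rightarrow> ('a,'c,'b,'d) textile" where
  "textile_invert T =
     \<lparr> tE = \<lparr> verts = verts (tE T), edges = verts (tF T), rng = qV T, src = pV T \<rparr>,
       tF = \<lparr> verts = edges (tE T), edges = edges (tF T), rng = qE T, src = pE T \<rparr>,
       pV = src (tE T), pE = src (tF T),
       qV = rng (tE T), qE = rng (tF T) \<rparr>"

text \<open>A square (a,b,g,f) records the identification
  a b ~ g f of the colour-(1,2) path a b (a colour 1, b colour 2) with the
  colour-(2,1) path g f (g colour 2, f colour 1). For a 2-graph, squares correspond
  bijectively to the elements of degree e1+e2 (via their two factorisations).\<close>
record ('a,'b,'c) sq2graph =
  V0  :: "'a set"
  C1  :: "'b set"
  C2  :: "'c set"
  r1  :: "'b \<Rightarrow> 'a"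
  s1  :: "'b \<Rightarrow> 'a"
  r2  :: "'c \<Rightarrow> 'a"
  s2  :: "'c \<Rightarrow> 'a"
  Sq  :: "('b \<times> 'c \<times> 'c \<times> 'b) set"

definition edges1 :: "('a,'b,'c) sq2graph \<Rightarrow> ('b + 'c) set" where
  "edges1 L = Inl ` C1 L \<union> Inr ` C2 L"

fun er :: "('a,'b,'c) sq2graph \<Rightarrow> ('b + 'c) \<Rightarrow> 'a" where
  "er L (Inl e) = r1 L e" | "er L (Inr g) = r2 L g"

fun es :: "('a,'b,'c) sq2graph \<Rightarrow> ('b + 'c) \<Rightarrow> 'a" where
  "es L (Inl e) = s1 L e" | "es L (Inr g) = s2 L g"

text \<open>Normal form of an element of degree (a,b): by the factorisation property each
  element of degree (a,b) is uniquely a composable path of a colour-1 edges followed by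
  b colour-2 edges (composition \<lambda>\<mu> defined when s(\<lambda>) = r(\<mu>)).\<close>
definition nf_path :: "('a,'b,'c) sq2graph \<Rightarrow> nat \<Rightarrow> nat \<Rightarrow> ('b + 'c) list \<Rightarrow> bool" where
  "nf_path L a b p \<longleftrightarrow>
     length p = a + b \<and> set p \<subseteq> edges1 L \<and>
     (\<forall>i < length p. (i < a \<longleftrightarrow> isl (p ! i))) \<and>
     (\<forall>i. Suc i < length p \<longrightarrow> es L (p ! i) = er L (p ! Suc i))"

text \<open>v \<Lambda>^(a,b) and \<Lambda>^(a,b) v (for (a,b) = (0,0) this is {v}, represented by [] ).\<close>
definition range_paths :: "('a,'b,'c) sq2graph \<Rightarrow> 'a \<Rightarrow> nat \<Rightarrow> nat \<Rightarrow> ('b + 'c) list set" where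
  "range_paths L v a b = {p. nf_path L a b p \<and> (p \<noteq> [] \<longrightarrow> er L (hd p) = v)}"

definition source_paths :: "('a,'b,'c) sq2graph \<Rightarrow> 'a \<Rightarrow> nat \<Rightarrow> nat \<Rightarrow> ('b + 'c) list set" where
  "source_paths L v a b = {p. nf_path L a b p \<and> (p \<noteq> [] \<longrightarrow> es L (last p) = v)}"

definition row_finite :: "('a,'b,'c) sq2graph \<Rightarrow> bool" where
  "row_finite L \<longleftrightarrow> (\<forall>v\<in>V0 L. \<forall>a b. finite (range_paths L v a b))"

definition essential :: "('a,'b,'c) sq2graph \<Rightarrow> bool" where
  "essential L \<longleftrightarrow>
     (\<forall>v\<in>V0 L. \<forall>a b. range_paths L v a b \<noteq> {} \<and> source_paths L v a b \<noteq> {})"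

definition twograph_of_textile :: "('a,'b,'c,'d) textile \<Rightarrow> ('a,'b,'c) sq2graph" where
  "twograph_of_textile T =
     \<lparr> V0 = verts (tE T), C1 = edges (tE T), C2 = verts (tF T),
       r1 = rng (tE T), s1 = src (tE T), r2 = qV T, s2 = pV T,
       Sq = (\<lambda>f. (qE T f, src (tF T) f, rng (tF T) f, pE T f)) ` edges (tF T) \<rparr>"

text \<open>The textile system T_\<Lambda> of a 2-graph, with \<Lambda>^(e1+e2) identified with the squares:
  for \<lambda> = (a,b,g,f) we have \<lambda>(0,e1) = a, \<lambda>(e1,e1+e2) = b, \<lambda>(0,e2) = g, \<lambda>(e2,e1+e2) = f.\<close>
definition textile_of_twograph ::
  "('a,'b,'c) sq2graph \<Rightarrow> ('a,'b,'c,'b \<times> 'c \<times> 'c \<times> 'b) textile" where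
  "textile_of_twograph L =
     \<lparr> tE = \<lparr> verts = V0 L, edges = C1 L, rng = r1 L, src = s1 L \<rparr>,
       tF = \<lparr> verts = C2 L, edges = Sq L,
              rng = (\<lambda>(a,b,g,f). g), src = (\<lambda>(a,b,g,f). b) \<rparr>,
       pV = s2 L, pE = (\<lambda>(a,b,g,f). f),
       qV = r2 L, qE = (\<lambda>(a,b,g,f). a) \<rparr>"

definition tg_insplit_partition ::
  "('a,'b,'c) sq2graph \<Rightarrow> ('a \<Rightarrow> nat) \<Rightarrow> ('a \<Rightarrow> nat \<Rightarrow> ('b + 'c) set) \<Rightarrow> bool" where
  "tg_insplit_partition L m G \<longleftrightarrow>
     (\<forall>z\<in>V0 L.
        (\<forall>j\<in>{1..m z}. G z j \<noteq> {}) \<and>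
        (\<forall>i\<in>{1..m z}. \<forall>j\<in>{1..m z}. i \<noteq> j \<longrightarrow> G z i \<inter> G z j = {}) \<and>
        (\<Union>j\<in>{1..m z}. G z j) = {x \<in> edges1 L. er L x = z}) \<and>
     (\<forall>(a,b,g,f)\<in>Sq L. \<exists>j\<in>{1..m (r1 L a)}. Inl a \<in> G (r1 L a) j \<and> Inr g \<in> G (r1 L a) j)"

definition tg_idx :: "('a,'b,'c) sq2graph \<Rightarrow> ('a \<Rightarrow> nat) \<Rightarrow> ('a \<Rightarrow> nat \<Rightarrow> ('b + 'c) set) \<Rightarrow> ('b + 'c) \<Rightarrow> nat" where
  "tg_idx L m G x = (THE j. j \<in> {1..m (er L x)} \<and> x \<in> G (er L x) j)"

definition tg_insplit ::
  "('a,'b,'c) sq2graph \<Rightarrow> ('a \<Rightarrow> nat) \<Rightarrow> ('a \<Rightarrow> nat \<Rightarrow> ('b + 'c) set)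
     \<Rightarrow> ('a \<times> nat, 'b \<times> nat, 'c \<times> nat) sq2graph" where
  "tg_insplit L m G =
     \<lparr> V0 = {(z,i). z \<in> V0 L \<and> i \<in> {1..m z}},
       C1 = {(e,i). e \<in> C1 L \<and> i \<in> {1..m (s1 L e)}},
       C2 = {(g,i). g \<in> C2 L \<and> i \<in> {1..m (s2 L g)}},
       r1 = (\<lambda>(e,i). (r1 L e, tg_idx L m G (Inl e))),
       s1 = (\<lambda>(e,i). (s1 L e, i)),
       r2 = (\<lambda>(g,i). (r2 L g, tg_idx L m G (Inr g))),
       s2 = (\<lambda>(g,i). (s2 L g, i)),
       Sq = {((a,i),(b,k),(g,j),(f,k)) | a b g f i j k.
               (a,b,g,f) \<in> Sq L \<and>
               i \<in> {1..m (s1 L a)} \<and> k \<in> {1..m (s2 L b)} \<and>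
               j \<in> {1..m (s2 L g)} \<and> k \<in> {1..m (s1 L f)} \<and>
               Inr b \<in> G (s1 L a) i \<and> Inl f \<in> G (s2 L g) j} \<rparr>"

end

theory Submission
  imports Defs
begin


lemma cont_two:
  assumes c1: "continuous_map X (discrete_topology A) pa"
    and c2: "continuous_map X (discrete_topology B) pb"
    and h: "\<forall>x\<in>topspace X. H (pa x) (pb x) \<in> C"
  shows "continuous_map X (discrete_topology C) (\<lambda>x. H (pa x) (pb x))"
  unfolding continuous_map_def
proof (intro conjI allI impI)
  show "(\<lambda>x. H (pa x) (pb x)) \<in> topspace X \<rightarrow> topspace (discrete_topology C)" using h by auto
  fix U assume "openin (discrete_topology C) U"
  show "openin X {x \<in> topspace X. H (pa x) (pb x) \<in> U}"
  proof (subst openin_subopen, intro ballI)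
    fix x0 assume x0: "x0 \<in> {x \<in> topspace X. H (pa x) (pb x) \<in> U}"
    have "pa x0 \<in> A" using continuous_map_image_subset_topspace[OF c1] x0 by auto
    then have o1: "openin X {x \<in> topspace X. pa x \<in> {pa x0}}"
      using c1 openin_continuous_map_preimage[OF c1, of "{pa x0}"] by simp
    have "pb x0 \<in> B" using continuous_map_image_subset_topspace[OF c2] x0 by auto
    then have o2: "openin X {x \<in> topspace X. pb x \<in> {pb x0}}"
      using openin_continuous_map_preimage[OF c2, of "{pb x0}"] by simp
    show "\<exists>T. openin X T \<and> x0 \<in> T \<and> T \<subseteq> {x \<in> topspace X. H (pa x) (pb x) \<in> U}"
      by (rule exI[of _ "{x \<in> topspace X. pa x \<in> {pa x0}} \<inter> {x \<in> topspace X. pb x \<in> {pb x0}}"])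
         (use o1 o2 x0 in auto)
  qed
qed

lemma topspace_shift: "topspace (shift_topology T) = shift_space T"
  unfolding shift_topology_def shift_space_def by (auto simp: PiE_def)

lemma proj_cont: "continuous_map (shift_topology T) (discrete_topology (edges (tF T))) (\<lambda>x. x n)"
  unfolding shift_topology_def
  by (rule continuous_map_from_subtopology) (rule continuous_map_product_projection, simp)

lemma cont_into:
  assumes "\<And>n. continuous_map X (discrete_topology (edges (tF T))) (\<lambda>x. h x n)"
    and "\<And>x. x \<in> topspace X \<Longrightarrow> h x \<in> shift_space T"
  shows "continuous_map X (shift_topology T) h"
  unfolding shift_topology_def continuous_map_in_subtopology
  using assms by (auto simp: continuous_map_componentwise_UNIV)




locale ctx6 =
  fixes T :: "('a,'b,'c,'d) textile"
    and m :: "'a \<Rightarrow> nat"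
    and G :: "'a \<Rightarrow> nat \<Rightarrow> ('b + 'c) set"
  assumes ts: "textile_system T"
    and lr: "LR T"
    and ess: "essential (twograph_of_textile T)"
    and part: "tg_insplit_partition (twograph_of_textile T) m G"
begin

abbreviation "L \<equiv> twograph_of_textile T"
abbreviation "E \<equiv> tE T"
abbreviation "F \<equiv> tF T"
abbreviation "idx \<equiv> tg_idx L m G"

lemma E_wf: "e \<in> edges E \<Longrightarrow> rng E e \<in> verts E \<and> src E e \<in> verts E"
  using ts unfolding textile_system_def dgraph_wf_def by blast
lemma F_wf: "f \<in> edges F \<Longrightarrow> rng F f \<in> verts F \<and> src F f \<in> verts F"
  using ts unfolding textile_system_def dgraph_wf_def by blast
lemma p_hom: "v \<in> verts F \<Longrightarrow> pV T v \<in> verts E"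
  "f \<in> edges F \<Longrightarrow> pE T f \<in> edges E \<and> rng E (pE T f) = pV T (rng F f) \<and> src E (pE T f) = pV T (src F f)"
  using ts unfolding textile_system_def graph_hom_def by blast+
lemma q_hom: "v \<in> verts F \<Longrightarrow> qV T v \<in> verts E"
  "f \<in> edges F \<Longrightarrow> qE T f \<in> edges E \<and> rng E (qE T f) = qV T (rng F f) \<and> src E (qE T f) = qV T (src F f)"
  using ts unfolding textile_system_def graph_hom_def by blast+
lemma tinj: "inj_on (\<lambda>f. (rng F f, pE T f, src F f, qE T f)) (edges F)"
  using ts unfolding textile_system_def by blast

lemma lr1: "v \<in> verts F \<Longrightarrow> e \<in> edges E \<Longrightarrow> pV T v = rng E e \<Longrightarrow>
   \<exists>f. f \<in> edges F \<and> rng F f = v \<and> pE T f = e"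
  using lr unfolding LR_def by blast
lemma lr2: "v \<in> verts F \<Longrightarrow> e \<in> edges E \<Longrightarrow> qV T v = src E e \<Longrightarrow>
   \<exists>f. f \<in> edges F \<and> src F f = v \<and> qE T f = e"
  using lr unfolding LR_def by blast

lemma L_simps[simp]: "V0 L = verts E" "C1 L = edges E" "C2 L = verts F"
  "r1 L = rng E" "s1 L = src E" "r2 L = qV T" "s2 L = pV T"
  "Sq L = (\<lambda>f. (qE T f, src F f, rng F f, pE T f)) ` edges F"
  by (simp_all add: twograph_of_textile_def)

lemma edges1_L: "edges1 L = Inl ` edges E \<union> Inr ` verts F"
  by (simp add: edges1_def L_simps)
lemma er_L: "er L (Inl e) = rng E e" "er L (Inr w) = qV T w"
  by (simp_all add: L_simps)

lemma ess1: assumes "z \<in> verts E" shows "\<exists>e\<in>edges E. rng E e = z"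
proof -
  from ess assms have "range_paths L z 1 0 \<noteq> {}" unfolding essential_def L_simps by blast
  then obtain p where p: "nf_path L 1 0 p" "p \<noteq> [] \<longrightarrow> er L (hd p) = z"
    unfolding range_paths_def by blast
  then have "length p = 1" "set p \<subseteq> edges1 L" "isl (p!0)" unfolding nf_path_def by auto
  then obtain e where "p = [Inl e]" 
    by (cases p) (auto simp: isl_def)
  then show ?thesis using p \<open>set p \<subseteq> edges1 L\<close> by (auto simp: edges1_L er_L)
qed

lemma ess2: assumes "z \<in> verts E" shows "\<exists>w\<in>verts F. qV T w = z"
proof -
  from ess assms have "range_paths L z 0 1 \<noteq> {}" unfolding essential_def L_simps by blast
  then obtain p where p: "nf_path L 0 1 p" "p \<noteq> [] \<longrightarrow> er L (hd p) = z"
    unfolding range_paths_def by blast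
  then have "length p = 1" "set p \<subseteq> edges1 L" "\<not> isl (p!0)" unfolding nf_path_def by auto
  then obtain w where "p = [Inr w]" 
    by (cases p) (auto, metis sum.collapse(2))
  then show ?thesis using p \<open>set p \<subseteq> edges1 L\<close> by (auto simp: edges1_L er_L)
qed

lemma part1: "z \<in> verts E \<Longrightarrow> (\<Union>j\<in>{1..m z}. G z j) = {x \<in> edges1 L. er L x = z}"
  and part2: "z \<in> verts E \<Longrightarrow> i\<in>{1..m z} \<Longrightarrow> j\<in>{1..m z} \<Longrightarrow> i \<noteq> j \<Longrightarrow> G z i \<inter> G z j = {}"
proof -
  have h: "\<forall>z\<in>V0 L.
        (\<forall>j\<in>{1..m z}. G z j \<noteq> {}) \<and>
        (\<forall>i\<in>{1..m z}. \<forall>j\<in>{1..m z}. i \<noteq> j \<longrightarrow> G z i \<inter> G z j = {}) \<and>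
        (\<Union>j\<in>{1..m z}. G z j) = {x \<in> edges1 L. er L x = z}"
    using part unfolding tg_insplit_partition_def by (rule conjunct1)
  show "z \<in> verts E \<Longrightarrow> (\<Union>j\<in>{1..m z}. G z j) = {x \<in> edges1 L. er L x = z}"
    using h by simp
  show "z \<in> verts E \<Longrightarrow> i\<in>{1..m z} \<Longrightarrow> j\<in>{1..m z} \<Longrightarrow> i \<noteq> j \<Longrightarrow> G z i \<inter> G z j = {}"
    using h by simp
qed

lemma er_in: "x \<in> edges1 L \<Longrightarrow> er L x \<in> verts E"
  by (auto simp: edges1_L er_L E_wf q_hom)

lemma idx_prop: assumes "x \<in> edges1 L"
  shows "idx x \<in> {1..m (er L x)} \<and> x \<in> G (er L x) (idx x)"
proof -
  have z: "er L x \<in> verts E" using er_in assms .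
  with part1[OF z] assms obtain j where j: "j \<in> {1..m (er L x)}" "x \<in> G (er L x) j" by blast
  have "idx x = j" unfolding tg_idx_def
    using j part2[OF z] by (intro the_equality) blast+
  then show ?thesis using j by simp
qed

lemma idx_eq: assumes "x \<in> edges1 L" "j \<in> {1..m (er L x)}" "x \<in> G (er L x) j"
  shows "idx x = j"
  using idx_prop[OF assms(1)] part2[OF er_in[OF assms(1)]] assms(2,3) by blast

lemma m_pos: "z \<in> verts E \<Longrightarrow> 1 \<le> m z"
proof -
  assume z: "z \<in> verts E"
  obtain e where "e \<in> edges E" "rng E e = z" using ess1[OF z] by blast
  then have "Inl e \<in> edges1 L" "er L (Inl e) = z" by (auto simp: edges1_L er_L)
  with idx_prop[of "Inl e"] show ?thesis by auto
qed

lemma pairing: assumes "f \<in> edges F" shows "idx (Inl (qE T f)) = idx (Inr (rng F f))"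
proof -
  have "(qE T f, src F f, rng F f, pE T f) \<in> Sq L" using assms by (simp add: L_simps)
  with part obtain j where j: "j \<in> {1..m (rng E (qE T f))}" "Inl (qE T f) \<in> G (rng E (qE T f)) j"
      "Inr (rng F f) \<in> G (rng E (qE T f)) j"
    unfolding tg_insplit_partition_def L_simps by fastforce
  have e1: "Inl (qE T f) \<in> edges1 L" "Inr (rng F f) \<in> edges1 L"
    using assms q_hom F_wf by (auto simp: edges1_L)
  have "er L (Inr (rng F f)) = rng E (qE T f)" using q_hom(2)[OF assms] by (simp add: er_L)
  then show ?thesis using idx_eq[OF e1(1)] idx_eq[OF e1(2)] j by (simp add: er_L)
qed

end



context ctx6 begin

definition m1 :: "'c \<Rightarrow> nat" where "m1 v = m (pV T v)"
definition P1 :: "'c \<Rightarrow> nat \<Rightarrow> 'd set" where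
  "P1 v k = {f \<in> edges F. rng F f = v \<and> Inl (pE T f) \<in> G (pV T v) k}"
abbreviation "TB \<equiv> textile_invert (textile_insplit T m1 P1)"
definition m2 :: "'b \<Rightarrow> nat" where "m2 e = 1"
definition P2 :: "'b \<Rightarrow> nat \<Rightarrow> ('d \<times> nat) set" where
  "P2 e k = {x \<in> edges (tF TB). rng (tF TB) x = e}"
abbreviation "TD \<equiv> textile_invert (textile_insplit TB m2 P2)"
abbreviation "TI \<equiv> textile_of_twograph (tg_insplit L m G)"

lemma TB_simps[simp]: "verts (tF TB) = edges E"
  "edges (tF TB) = {(f,j). f \<in> edges F \<and> j \<in> {1..m1 (src F f)}}"
  "rng (tF TB) = (\<lambda>(f,j). qE T f)"
  "src (tF TB) = (\<lambda>(f,j). pE T f)"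
  by (auto simp: textile_invert_def textile_insplit_def dg_insplit_def)

lemma TD_simps[simp]:
  "edges (tF TD) = {((f,k),j). f \<in> edges F \<and> k \<in> {1..m (pV T (src F f))} \<and> j = 1}"
  "rng (tF TD) ((f,k),j) = (rng F f, dg_idx m1 P1 (rng F f) f)"
  "src (tF TD) ((f,k),j) = (src F f, k)"
  "pE TD ((f,k),j) = (pE T f, j)"
  "qE TD ((f,k),j) = (qE T f, dg_idx m2 P2 (qE T f) (f,k))"
  by (auto simp: textile_invert_def textile_insplit_def dg_insplit_def m1_def m2_def)

lemma TI_simps[simp]:
  "edges (tF TI) = Sq (tg_insplit L m G)"
  "rng (tF TI) (a,b,g,f) = g"
  "src (tF TI) (a,b,g,f) = b"
  "pE TI (a,b,g,f) = f"
  "qE TI (a,b,g,f) = a"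
  by (auto simp: textile_of_twograph_def)

lemma partition1: "dg_insplit_partition F m1 P1"
  unfolding dg_insplit_partition_def
proof (rule ballI, intro conjI)
  fix v assume v: "v \<in> verts F"
  have pv: "pV T v \<in> verts E" using p_hom(1)[OF v] .
  show "\<forall>k\<in>{1..m1 v}. P1 v k \<noteq> {}"
  proof
    fix k assume k: "k \<in> {1..m1 v}" 
    have "G (pV T v) k \<noteq> {}" using part k pv unfolding tg_insplit_partition_def m1_def by simp
    then obtain x where x: "x \<in> G (pV T v) k" by blast
    have "x \<in> (\<Union>j\<in>{1..m (pV T v)}. G (pV T v) j)" using x k unfolding m1_def by blast
    then have x1: "x \<in> edges1 L" "er L x = pV T v" unfolding part1[OF pv] by simp_all
    have kx: "idx x = k" using idx_eq[OF x1(1)] x1(2) x k by (simp add: m1_def)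
    show "P1 v k \<noteq> {}"
    proof (cases x)
      case (Inl e)
      then have ee: "e \<in> edges E" "rng E e = pV T v" using x1 by (auto simp: edges1_L)
      obtain f where "f \<in> edges F" "rng F f = v" "pE T f = e" using lr1[OF v ee(1)] ee(2) by auto
      then have "f \<in> P1 v k" using x Inl unfolding P1_def by simp
      then show ?thesis by blast
    next
      case (Inr w)
      then have w: "w \<in> verts F" "qV T w = pV T v" using x1 by (auto simp: edges1_L)
      obtain e' where e': "e' \<in> edges E" "rng E e' = pV T w" using ess1[OF p_hom(1)[OF w(1)]] by blast
      obtain t where t: "t \<in> edges F" "rng F t = w" "pE T t = e'" using lr1[OF w(1) e'(1)] e'(2) by auto
      have "idx (Inl (qE T t)) = k" using pairing[OF t(1)] t(2) kx Inr by simp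
      moreover have i1: "Inl (qE T t) \<in> edges1 L" using q_hom(2)[OF t(1)] by (simp add: edges1_L)
      moreover have "er L (Inl (qE T t)) = pV T v" using q_hom(2)[OF t(1)] t(2) w(2) by simp
      ultimately have inG: "Inl (qE T t) \<in> G (pV T v) k" using idx_prop[OF i1] by simp
      have rq: "rng E (qE T t) = pV T v" using q_hom(2)[OF t(1)] t(2) w(2) by simp
      obtain f where "f \<in> edges F" "rng F f = v" "pE T f = qE T t"
        using lr1[OF v conjunct1[OF q_hom(2)[OF t(1)]]] rq by auto
      then have "f \<in> P1 v k" using inG unfolding P1_def by simp
      then show ?thesis by blast
    qed
  qed
  show "\<forall>k\<in>{1..m1 v}. \<forall>l\<in>{1..m1 v}. k \<noteq> l \<longrightarrow> P1 v k \<inter> P1 v l = {}"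
  proof (intro ballI impI)
    fix k l assume kl: "k \<in> {1..m1 v}" "l \<in> {1..m1 v}" "k \<noteq> l"
    have "G (pV T v) k \<inter> G (pV T v) l = {}" using part2[OF pv] kl unfolding m1_def by simp
    then show "P1 v k \<inter> P1 v l = {}" unfolding P1_def by blast
  qed
  show "(\<Union>k\<in>{1..m1 v}. P1 v k) = {f \<in> edges F. rng F f = v}"
  proof
    show "(\<Union>k\<in>{1..m1 v}. P1 v k) \<subseteq> {f \<in> edges F. rng F f = v}" unfolding P1_def by blast
    show "{f \<in> edges F. rng F f = v} \<subseteq> (\<Union>k\<in>{1..m1 v}. P1 v k)"
    proof
      fix f assume f: "f \<in> {f \<in> edges F. rng F f = v}"
      then have i1: "Inl (pE T f) \<in> edges1 L" "er L (Inl (pE T f)) = pV T v"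
        using p_hom(2) by (auto simp: edges1_L)
      obtain j where j: "j \<in> {1..m (pV T v)}" "Inl (pE T f) \<in> G (pV T v) j"
        using idx_prop[OF i1(1)] unfolding i1(2) by blast
      then have "f \<in> P1 v j" using f unfolding P1_def by simp
      then show "f \<in> (\<Union>k\<in>{1..m1 v}. P1 v k)" using j(1) unfolding m1_def by blast
    qed
  qed
qed

lemma idx1: assumes f: "f \<in> edges F" shows "dg_idx m1 P1 (rng F f) f = idx (Inl (pE T f))"
proof -
  have i1: "Inl (pE T f) \<in> edges1 L" "er L (Inl (pE T f)) = pV T (rng F f)"
    using p_hom(2)[OF f] by (auto simp: edges1_L)
  have pv: "pV T (rng F f) \<in> verts E" using p_hom(1) F_wf f by blast
  show ?thesis unfolding dg_idx_def
  proof (rule the_equality)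
    show "idx (Inl (pE T f)) \<in> {1..m1 (rng F f)} \<and> f \<in> P1 (rng F f) (idx (Inl (pE T f)))"
      using idx_prop[OF i1(1)] i1(2) f unfolding m1_def P1_def by simp
    show "k = idx (Inl (pE T f))" if "k \<in> {1..m1 (rng F f)} \<and> f \<in> P1 (rng F f) k" for k
      using that idx_eq[OF i1(1), of k] i1(2) unfolding m1_def P1_def by auto
  qed
qed

lemma partition2: "dg_insplit_partition (tF TB) m2 P2"
  unfolding dg_insplit_partition_def
proof (rule ballI, intro conjI)
  fix e assume e: "e \<in> verts (tF TB)"
  then have e: "e \<in> edges E" by simp
  show "\<forall>k\<in>{1..m2 e}. P2 e k \<noteq> {}"
  proof
    fix k assume "k \<in> {1..m2 e}" 
    obtain w where w: "w \<in> verts F" "qV T w = src E e" using ess2 E_wf[OF e] by blast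
    obtain f where f: "f \<in> edges F" "src F f = w" "qE T f = e" using lr2[OF w(1) e w(2)] by blast
    have "1 \<le> m1 (src F f)" using m_pos[OF p_hom(1)[OF w(1)]] f(2) unfolding m1_def by simp
    have "(f,1) \<in> edges (tF TB)" using f \<open>1 \<le> m1 (src F f)\<close> by simp
    then have "(f,1) \<in> P2 e k" using f unfolding P2_def by simp
    then show "P2 e k \<noteq> {}" by blast
  qed
  show "\<forall>k\<in>{1..m2 e}. \<forall>l\<in>{1..m2 e}. k \<noteq> l \<longrightarrow> P2 e k \<inter> P2 e l = {}"
    unfolding m2_def by simp
  show "(\<Union>k\<in>{1..m2 e}. P2 e k) = {f \<in> edges (tF TB). rng (tF TB) f = e}"
    unfolding m2_def P2_def by simp
qed

lemma idx2: assumes "f \<in> edges F" "j \<in> {1..m1 (src F f)}"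
  shows "dg_idx m2 P2 (qE T f) (f,j) = 1"
  unfolding dg_idx_def m2_def P2_def using assms by (intro the_equality) auto

end



context ctx6 begin

definition phi :: "'d \<Rightarrow> nat \<Rightarrow> ('b\<times>nat)\<times>('c\<times>nat)\<times>('c\<times>nat)\<times>('b\<times>nat)" where
  "phi f k = ((qE T f, idx (Inr (src F f))), (src F f, k), (rng F f, idx (Inl (pE T f))), (pE T f, k))"

definition Dset :: "('d \<times> nat) set" where
  "Dset = {(f,k). f \<in> edges F \<and> k \<in> {1..m (pV T (src F f))}}"

lemma SqI_def': "Sq (tg_insplit L m G) = {((a,i),(b,k),(g,j),(f,k)) | a b g f i j k.
  (a,b,g,f) \<in> Sq L \<and> i \<in> {1..m (src E a)} \<and> k \<in> {1..m (pV T b)} \<and> j \<in> {1..m (pV T g)} \<and>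
  k \<in> {1..m (src E f)} \<and> Inr b \<in> G (src E a) i \<and> Inl f \<in> G (pV T g) j}"
  by (simp add: tg_insplit_def)

lemma phi_in: assumes "f \<in> edges F" "k \<in> {1..m (pV T (src F f))}"
  shows "phi f k \<in> Sq (tg_insplit L m G)"
proof -
  have ib: "Inr (src F f) \<in> edges1 L" using F_wf assms(1) by (simp add: edges1_L)
  have ef: "Inl (pE T f) \<in> edges1 L" using p_hom(2) assms(1) by (simp add: edges1_L)
  have q: "src E (qE T f) = qV T (src F f)" "rng E (pE T f) = pV T (rng F f)"
     "src E (pE T f) = pV T (src F f)"
    using q_hom(2)[OF assms(1)] p_hom(2)[OF assms(1)] by simp_all
  have A: "idx (Inr (src F f)) \<in> {1..m (src E (qE T f))} \<and> Inr (src F f) \<in> G (src E (qE T f)) (idx (Inr (src F f)))"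
    using idx_prop[OF ib] q(1) by simp
  have B: "idx (Inl (pE T f)) \<in> {1..m (pV T (rng F f))} \<and> Inl (pE T f) \<in> G (pV T (rng F f)) (idx (Inl (pE T f)))"
    using idx_prop[OF ef] q(2) by simp
  have C: "(qE T f, src F f, rng F f, pE T f) \<in> Sq L" using assms(1) by simp
  show ?thesis unfolding SqI_def' phi_def
    apply (rule CollectI)
    apply (rule exI[of _ "qE T f"], rule exI[of _ "src F f"], rule exI[of _ "rng F f"], rule exI[of _ "pE T f"])
    apply (rule exI[of _ "idx (Inr (src F f))"], rule exI[of _ "idx (Inl (pE T f))"], rule exI[of _ k])
    using A B C assms(2) q(3) by simp
qed

lemma SqI_mem: "z \<in> Sq (tg_insplit L m G) \<longleftrightarrow> (\<exists>f k. (f,k) \<in> Dset \<and> z = phi f k)"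
proof
  assume "\<exists>f k. (f,k) \<in> Dset \<and> z = phi f k"
  then show "z \<in> Sq (tg_insplit L m G)" using phi_in unfolding Dset_def by blast
next
  assume "z \<in> Sq (tg_insplit L m G)"
  then obtain a b g f i j k where z: "z = ((a,i),(b,k),(g,j),(f,k))" and
    h: "(a,b,g,f) \<in> Sq L" "i \<in> {1..m (src E a)}" "k \<in> {1..m (pV T b)}" "j \<in> {1..m (pV T g)}"
       "Inr b \<in> G (src E a) i" "Inl f \<in> G (pV T g) j"
    unfolding SqI_def' by blast
  from h(1) obtain t where t: "t \<in> edges F" "a = qE T t" "b = src F t" "g = rng F t" "f = pE T t"
    by auto
  have ib: "Inr b \<in> edges1 L" using F_wf t by (simp add: edges1_L)
  have ef: "Inl f \<in> edges1 L" using p_hom(2) t by (simp add: edges1_L)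
  have q: "src E a = qV T b" "pV T g = rng E f"
    using q_hom(2)[OF t(1)] p_hom(2)[OF t(1)] t by simp_all
  have "idx (Inr b) = i" using idx_eq[OF ib] h q by simp
  moreover have "idx (Inl f) = j" using idx_eq[OF ef] h q by simp
  ultimately have "z = phi t k" using z t unfolding phi_def by simp
  moreover have "(t,k) \<in> Dset" using t h(3) unfolding Dset_def by simp
  ultimately show "\<exists>f k. (f,k) \<in> Dset \<and> z = phi f k" by blast
qed

lemma phi_inj: "phi f k = phi f' k' \<Longrightarrow> f \<in> edges F \<Longrightarrow> f' \<in> edges F \<Longrightarrow> f = f' \<and> k = k'"
  unfolding phi_def using tinj unfolding inj_on_def by auto

definition cond :: "(nat\<times>nat \<Rightarrow> 'd) \<Rightarrow> (nat\<times>nat \<Rightarrow> nat) \<Rightarrow> bool" where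
  "cond f k \<longleftrightarrow> (\<forall>i j. f (i,j) \<in> edges F \<and> k (i,j) \<in> {1..m (pV T (src F (f (i,j))))} \<and>
     src F (f (i,j)) = rng F (f (Suc i, j)) \<and> pE T (f (i,j)) = qE T (f (i, Suc j)) \<and>
     k (i,j) = idx (Inl (pE T (f (Suc i, j)))))"

lemma XI_char: "z \<in> shift_space TI \<longleftrightarrow> (\<exists>f k. z = (\<lambda>n. phi (f n) (k n)) \<and> cond f k)"
proof
  assume z: "z \<in> shift_space TI"
  have "\<forall>n. \<exists>p. p \<in> Dset \<and> z n = phi (fst p) (snd p)"
  proof
    fix n
    have "z n \<in> Sq (tg_insplit L m G)" using z unfolding shift_space_def
      by (cases n) simp
    then show "\<exists>p. p \<in> Dset \<and> z n = phi (fst p) (snd p)" unfolding SqI_mem by auto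
  qed
  then obtain pp where pp: "\<And>n. pp n \<in> Dset" "\<And>n. z n = phi (fst (pp n)) (snd (pp n))" by metis
  define f where "f = (\<lambda>n. fst (pp n))"
  define k where "k = (\<lambda>n. snd (pp n))"
  have zz: "z = (\<lambda>n. phi (f n) (k n))" using pp(2) unfolding f_def k_def by auto
  have "cond f k" unfolding cond_def
  proof (intro allI)
    fix i j
    have d: "f (i,j) \<in> edges F" "k (i,j) \<in> {1..m (pV T (src F (f (i,j))))}"
      using pp(1)[of "(i,j)"] unfolding f_def k_def Dset_def by auto
    have s1: "src (tF TI) (z (i,j)) = rng (tF TI) (z (Suc i, j))"
      "pE TI (z (i,j)) = qE TI (z (i, Suc j))"
      using z unfolding shift_space_def by blast+
    then have "src F (f (i,j)) = rng F (f (Suc i, j)) \<and> k (i,j) = idx (Inl (pE T (f (Suc i, j))))"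
      "pE T (f (i,j)) = qE T (f (i, Suc j))"
      unfolding zz phi_def by simp_all
    then show "f (i,j) \<in> edges F \<and> k (i,j) \<in> {1..m (pV T (src F (f (i,j))))} \<and>
     src F (f (i,j)) = rng F (f (Suc i, j)) \<and> pE T (f (i,j)) = qE T (f (i, Suc j)) \<and>
     k (i,j) = idx (Inl (pE T (f (Suc i, j))))" using d by simp
  qed
  then show "\<exists>f k. z = (\<lambda>n. phi (f n) (k n)) \<and> cond f k" using zz by blast
next
  assume "\<exists>f k. z = (\<lambda>n. phi (f n) (k n)) \<and> cond f k"
  then obtain f k where zz: "z = (\<lambda>n. phi (f n) (k n))" and c: "cond f k" by blast
  show "z \<in> shift_space TI" unfolding shift_space_def
  proof (intro CollectI allI conjI)
    fix i j
    have d0: "f (i,j) \<in> edges F" "k (i,j) \<in> {1..m (pV T (src F (f (i,j))))}"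
      using c unfolding cond_def by blast+
    show "z (i,j) \<in> edges (tF TI)" using phi_in[OF d0] unfolding zz by simp
    show "src (tF TI) (z (i,j)) = rng (tF TI) (z (Suc i, j))"
      using c unfolding zz cond_def phi_def by simp
    have a: "pE T (f (Suc i, j)) = qE T (f (Suc i, Suc j))"
      "src F (f (i, Suc j)) = rng F (f (Suc i, Suc j))" "f (Suc i, Suc j) \<in> edges F"
      using c unfolding cond_def by blast+
    have "k (i,j) = idx (Inr (src F (f (i, Suc j))))"
      using c pairing[OF a(3)] a(1,2) unfolding cond_def by simp
    then show "pE TI (z (i,j)) = qE TI (z (i, Suc j))"
      using c unfolding zz cond_def phi_def by simp
  qed
qed

lemma XD_char: "y \<in> shift_space TD \<longleftrightarrow> (\<exists>f k. y = (\<lambda>n. ((f n, k n), 1)) \<and> cond f k)"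
proof
  assume y: "y \<in> shift_space TD"
  define f where "f = (\<lambda>n. fst (fst (y n)))"
  define k where "k = (\<lambda>n. snd (fst (y n)))"
  have yn0: "\<forall>i j. y (i,j) \<in> edges (tF TD)" using y unfolding shift_space_def mem_Collect_eq by blast
  have memD: "\<And>x. x \<in> edges (tF TD) \<longleftrightarrow> fst (fst x) \<in> edges F \<and> snd (fst x) \<in> {1..m (pV T (src F (fst (fst x))))} \<and> snd x = 1"
    by auto
  have yn: "\<And>n. fst (fst (y n)) \<in> edges F \<and> snd (fst (y n)) \<in> {1..m (pV T (src F (fst (fst (y n)))))} \<and> snd (y n) = 1"
    using yn0 memD by (metis surj_pair)
  have yy: "y = (\<lambda>n. ((f n, k n), 1))"
  proof
    fix n show "y n = ((f n, k n), 1)" using yn[of n] unfolding f_def k_def by (metis prod.collapse)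
  qed
  have "cond f k" unfolding cond_def
  proof (intro allI)
    fix i j
    have d: "f (i,j) \<in> edges F" "k (i,j) \<in> {1..m (pV T (src F (f (i,j))))}"
      using yn[of "(i,j)"] unfolding f_def k_def by auto
    have d2: "f (Suc i,j) \<in> edges F"
      using yn[of "(Suc i,j)"] unfolding f_def k_def by auto
    have s1: "src (tF TD) (y (i,j)) = rng (tF TD) (y (Suc i, j))"
      "pE TD (y (i,j)) = qE TD (y (i, Suc j))"
      using y unfolding shift_space_def by blast+
    then have "src F (f (i,j)) = rng F (f (Suc i, j)) \<and> k (i,j) = idx (Inl (pE T (f (Suc i, j))))"
      "pE T (f (i,j)) = qE T (f (i, Suc j))"
      unfolding yy using idx1[OF d2] by simp_all
    then show "f (i,j) \<in> edges F \<and> k (i,j) \<in> {1..m (pV T (src F (f (i,j))))} \<and>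
     src F (f (i,j)) = rng F (f (Suc i, j)) \<and> pE T (f (i,j)) = qE T (f (i, Suc j)) \<and>
     k (i,j) = idx (Inl (pE T (f (Suc i, j))))" using d by simp
  qed
  then show "\<exists>f k. y = (\<lambda>n. ((f n, k n), 1)) \<and> cond f k" using yy by blast
next
  assume "\<exists>f k. y = (\<lambda>n. ((f n, k n), 1)) \<and> cond f k"
  then obtain f k where yy: "y = (\<lambda>n. ((f n, k n), 1))" and c: "cond f k" by blast
  show "y \<in> shift_space TD" unfolding shift_space_def
  proof (intro CollectI allI conjI)
    fix i j
    have d0: "f (i,j) \<in> edges F" "k (i,j) \<in> {1..m (pV T (src F (f (i,j))))}"
      using c unfolding cond_def by blast+
    show "y (i,j) \<in> edges (tF TD)" using d0 unfolding yy by simp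
    have d2: "f (Suc i,j) \<in> edges F" using c unfolding cond_def by blast
    show "src (tF TD) (y (i,j)) = rng (tF TD) (y (Suc i, j))"
      using c idx1[OF d2] unfolding yy cond_def by simp
    have d3: "f (i, Suc j) \<in> edges F" "k (i, Suc j) \<in> {1..m1 (src F (f (i, Suc j)))}"
      using c unfolding cond_def m1_def by blast+
    show "pE TD (y (i,j)) = qE TD (y (i, Suc j))"
      using c idx2[OF d3] unfolding yy cond_def by simp
  qed
qed

end



context ctx6 begin

lemma first_part:
  "\<exists>m1 P1 m2 P2.
            dg_insplit_partition (tF T) m1 P1 \<and>
            dg_insplit_partition (tF (textile_invert (textile_insplit T m1 P1))) m2 P2 \<and>
            (\<exists>\<phi>. bij_betw \<phi>
                   (edges (tF (textile_invert (textile_insplit (textile_invert (textile_insplit T m1 P1)) m2 P2))))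
                   (edges (tF (textile_of_twograph (tg_insplit (twograph_of_textile T) m G)))) \<and>
                 (\<lambda>x. \<phi> \<circ> x) ` shift_space (textile_invert (textile_insplit (textile_invert (textile_insplit T m1 P1)) m2 P2))
                   = shift_space (textile_of_twograph (tg_insplit (twograph_of_textile T) m G)))"
proof (intro exI conjI)
  show "dg_insplit_partition F m1 P1" by (rule partition1)
  show "dg_insplit_partition (tF TB) m2 P2" by (rule partition2)
  define \<phi> :: "('d \<times> nat) \<times> nat \<Rightarrow> _" where "\<phi> = (\<lambda>((f,k),j). phi f k)"
  show "bij_betw \<phi> (edges (tF TD)) (edges (tF TI))"
    unfolding bij_betw_def
  proof
    show "inj_on \<phi> (edges (tF TD))"
      unfolding inj_on_def \<phi>_def using phi_inj by auto
    show "\<phi> ` edges (tF TD) = edges (tF TI)"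
    proof
      show "\<phi> ` edges (tF TD) \<subseteq> edges (tF TI)"
        unfolding \<phi>_def using phi_in by auto
      show "edges (tF TI) \<subseteq> \<phi> ` edges (tF TD)"
      proof
        fix z assume "z \<in> edges (tF TI)"
        then obtain f k where fk: "(f,k) \<in> Dset" "z = phi f k" using SqI_mem by auto
        then have "((f,k),1) \<in> edges (tF TD)" unfolding Dset_def by simp
        moreover have "z = \<phi> ((f,k),1)" using fk unfolding \<phi>_def by simp
        ultimately show "z \<in> \<phi> ` edges (tF TD)" by blast
      qed
    qed
  qed
  show "(\<lambda>x. \<phi> \<circ> x) ` shift_space TD = shift_space TI"
  proof
    show "(\<lambda>x. \<phi> \<circ> x) ` shift_space TD \<subseteq> shift_space TI"
    proof
      fix z assume "z \<in> (\<lambda>x. \<phi> \<circ> x) ` shift_space TD"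
      then obtain y where y: "y \<in> shift_space TD" "z = \<phi> \<circ> y" by blast
      then obtain f k where "y = (\<lambda>n. ((f n, k n), 1))" "cond f k" using XD_char by blast
      then have "z = (\<lambda>n. phi (f n) (k n)) \<and> cond f k" using y(2) unfolding \<phi>_def by auto
      then show "z \<in> shift_space TI" using XI_char by blast
    qed
    show "shift_space TI \<subseteq> (\<lambda>x. \<phi> \<circ> x) ` shift_space TD"
    proof
      fix z assume "z \<in> shift_space TI"
      then obtain f k where fk: "z = (\<lambda>n. phi (f n) (k n))" "cond f k" using XI_char by blast
      then have "(\<lambda>n. ((f n, k n), 1)) \<in> shift_space TD" using XD_char by blast
      moreover have "z = \<phi> \<circ> (\<lambda>n. ((f n, k n), 1))" using fk unfolding \<phi>_def by auto
      ultimately show "z \<in> (\<lambda>x. \<phi> \<circ> x) ` shift_space TD" by blast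
    qed
  qed
qed

definition hmap :: "(nat \<times> nat \<Rightarrow> 'd) \<Rightarrow> _" where
  "hmap x = (\<lambda>n. phi (x n) (idx (Inl (pE T (x (Suc (fst n), snd n))))))"

definition tileof :: "('b\<times>nat)\<times>('c\<times>nat)\<times>('c\<times>nat)\<times>('b\<times>nat) \<Rightarrow> 'd" where
  "tileof z = inv_into (edges F) (\<lambda>f. (rng F f, pE T f, src F f, qE T f))
     (fst (fst (snd (snd z))), fst (snd (snd (snd z))), fst (fst (snd z)), fst (fst z))"

definition gmap :: "(nat \<times> nat \<Rightarrow> _) \<Rightarrow> (nat \<times> nat \<Rightarrow> 'd)" where
  "gmap z = (\<lambda>n. tileof (z n))"

lemma tileof_phi: "f \<in> edges F \<Longrightarrow> tileof (phi f k) = f"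
  unfolding tileof_def phi_def using inv_into_f_f[OF tinj] by simp

lemma hmap_in: assumes x: "x \<in> shift_space T"
  shows "hmap x \<in> shift_space TI"
proof -
  define k where "k = (\<lambda>n::nat\<times>nat. idx (Inl (pE T (x (Suc (fst n), snd n)))))"
  have xx: "\<forall>i j. x (i,j) \<in> edges F \<and> src F (x (i,j)) = rng F (x (Suc i, j)) \<and> pE T (x (i,j)) = qE T (x (i, Suc j))"
    using x unfolding shift_space_def by blast
  have "cond x k" unfolding cond_def
  proof (intro allI)
    fix i j
    have a: "x (Suc i, j) \<in> edges F" using xx by blast
    have ef: "Inl (pE T (x (Suc i, j))) \<in> edges1 L" using p_hom(2)[OF a] by (simp add: edges1_L)
    have "k (i,j) \<in> {1..m (er L (Inl (pE T (x (Suc i, j)))))}" using idx_prop[OF ef] unfolding k_def by simp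
    then have "k (i,j) \<in> {1..m (pV T (src F (x (i,j))))}" using p_hom(2)[OF a] xx by simp
    then show "x (i,j) \<in> edges F \<and> k (i,j) \<in> {1..m (pV T (src F (x (i,j))))} \<and>
     src F (x (i,j)) = rng F (x (Suc i, j)) \<and> pE T (x (i,j)) = qE T (x (i, Suc j)) \<and>
     k (i,j) = idx (Inl (pE T (x (Suc i, j))))" using xx unfolding k_def by simp
  qed
  moreover have "hmap x = (\<lambda>n. phi (x n) (k n))" unfolding hmap_def k_def by simp
  ultimately show ?thesis using XI_char by blast
qed

lemma conj_part: "conjugate_shifts T TI"
  unfolding conjugate_shifts_def
proof (intro exI conjI)
  show "homeomorphic_map (shift_topology T) (shift_topology TI) hmap"
    unfolding homeomorphic_map_maps
  proof (rule exI[of _ gmap], unfold homeomorphic_maps_def, intro conjI)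
    show "continuous_map (shift_topology T) (shift_topology TI) hmap"
    proof (rule cont_into)
      fix n
      show "continuous_map (shift_topology T) (discrete_topology (edges (tF TI))) (\<lambda>x. hmap x n)"
        unfolding hmap_def
      proof (rule cont_two[where pa = "\<lambda>x. x n" and pb = "\<lambda>x. x (Suc (fst n), snd n)"
            and H = "\<lambda>a b. phi a (idx (Inl (pE T b)))", OF proj_cont proj_cont])
        show "\<forall>x\<in>topspace (shift_topology T). phi (x n) (idx (Inl (pE T (x (Suc (fst n), snd n))))) \<in> edges (tF TI)"
        proof
          fix x assume "x \<in> topspace (shift_topology T)"
          then have "hmap x \<in> shift_space TI" using hmap_in topspace_shift by blast
          then have "hmap x n \<in> edges (tF TI)" unfolding shift_space_def by (cases n) blast
          then show "phi (x n) (idx (Inl (pE T (x (Suc (fst n), snd n))))) \<in> edges (tF TI)"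
            unfolding hmap_def by simp
        qed
      qed
    next
      fix x assume "x \<in> topspace (shift_topology T)"
      then show "hmap x \<in> shift_space TI" using hmap_in topspace_shift by blast
    qed
    show "continuous_map (shift_topology TI) (shift_topology T) gmap"
    proof (rule cont_into)
      fix n
      show "continuous_map (shift_topology TI) (discrete_topology (edges (tF T))) (\<lambda>x. gmap x n)"
        unfolding gmap_def
      proof (rule cont_two[where pa = "\<lambda>x. x n" and pb = "\<lambda>x. x n"
            and H = "\<lambda>a b. tileof a", OF proj_cont proj_cont])
        show "\<forall>z\<in>topspace (shift_topology TI). tileof (z n) \<in> edges (tF T)"
        proof
          fix z assume "z \<in> topspace (shift_topology TI)"
          then obtain f k where fk: "z = (\<lambda>n. phi (f n) (k n))" "cond f k"
            using XI_char topspace_shift by blast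
          have "f n \<in> edges F" using fk(2) unfolding cond_def by (cases n) blast
          then show "tileof (z n) \<in> edges (tF T)" using fk(1) tileof_phi by simp
        qed
      qed
    next
      fix z assume "z \<in> topspace (shift_topology TI)"
      then obtain f k where fk: "z = (\<lambda>n. phi (f n) (k n))" "cond f k"
        using XI_char topspace_shift by blast
      have "gmap z = f"
      proof
        fix n
        have "f n \<in> edges F" using fk(2) unfolding cond_def by (cases n) blast
        then show "gmap z n = f n" using fk(1) tileof_phi unfolding gmap_def by simp
      qed
      then show "gmap z \<in> shift_space T" unfolding shift_space_def using fk(2) unfolding cond_def by blast
    qed
    show "\<forall>x\<in>topspace (shift_topology T). gmap (hmap x) = x"
    proof
      fix x assume "x \<in> topspace (shift_topology T)"
      then have xx: "\<And>n. x n \<in> edges F" unfolding topspace_shift shift_space_def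
        by (metis (mono_tags, lifting) mem_Collect_eq surj_pair)
      show "gmap (hmap x) = x" unfolding gmap_def hmap_def using tileof_phi[OF xx] by simp
    qed
    show "\<forall>z\<in>topspace (shift_topology TI). hmap (gmap z) = z"
    proof
      fix z assume "z \<in> topspace (shift_topology TI)"
      then obtain f k where fk: "z = (\<lambda>n. phi (f n) (k n))" "cond f k"
        using XI_char topspace_shift by blast
      have "gmap z = f"
      proof
        fix n
        have "f n \<in> edges F" using fk(2) unfolding cond_def by (cases n) blast
        then show "gmap z n = f n" using fk(1) tileof_phi unfolding gmap_def by simp
      qed
      moreover have "hmap f = z"
      proof
        fix n :: "nat \<times> nat"
        obtain i j where n: "n = (i,j)" by (cases n)
        have "k (i,j) = idx (Inl (pE T (f (Suc i, j))))" using fk(2) unfolding cond_def by blast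
        then show "hmap f n = z n" unfolding hmap_def fk(1) n by simp
      qed
      ultimately show "hmap (gmap z) = z" by simp
    qed
  qed
  show "\<forall>m. \<forall>x\<in>shift_space T. hmap (shift m x) = shift m (hmap x)"
    by (auto simp: hmap_def shift_def)
qed

end


theorem theorem6p1:
  fixes T :: "('a,'b,'c,'d) textile"
    and m :: "'a \<Rightarrow> nat"
    and G :: "'a \<Rightarrow> nat \<Rightarrow> ('b + 'c) set"
  assumes "textile_system T"
    and "LR T"
    and "row_finite (twograph_of_textile T)"
    and "essential (twograph_of_textile T)"
    and "tg_insplit_partition (twograph_of_textile T) m G"
  shows "(\<exists>m1 P1 m2 P2.
            dg_insplit_partition (tF T) m1 P1 \<and>
            dg_insplit_partition (tF (textile_invert (textile_insplit T m1 P1))) m2 P2 \<and>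
            (\<exists>\<phi>. bij_betw \<phi>
                   (edges (tF (textile_invert (textile_insplit (textile_invert (textile_insplit T m1 P1)) m2 P2))))
                   (edges (tF (textile_of_twograph (tg_insplit (twograph_of_textile T) m G)))) \<and>
                 (\<lambda>x. \<phi> \<circ> x) ` shift_space (textile_invert (textile_insplit (textile_invert (textile_insplit T m1 P1)) m2 P2))
                   = shift_space (textile_of_twograph (tg_insplit (twograph_of_textile T) m G))))
         \<and> conjugate_shifts T (textile_of_twograph (tg_insplit (twograph_of_textile T) m G))"
  proof -
  interpret ctx6 T m G using assms(1,2,4,5) by unfold_locales
  show ?thesis using first_part conj_part by blast
qed

end
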